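(* Let $d\ge2$, let $\mu\ge0$ be a finite measure with compact support in $\mathbb{R}^d$, let $\lambda>0$, $p\ge1$, and let $\varepsilon_n\to0^+$. Then the functionals $\mathcal{E}_\mu^{\lambda,\varepsilon_n,p}$ $\Gamma$-converge, as $n\to\infty$, to $E_\mu^{\lambda,p}$ with respect to the topology on $\mathcal{C}$ induced by the metric $m$; that is: (a) for every sequence $\varphi_n\to\varphi$ in $(\mathcal{C},m)$, $\liminf_n\mathcal{E}_\mu^{\lambda,\varepsilon_n,p}(\varphi_n)\ge E_\mu^{\lambda,p}(\varphi)$; (b) for every $\varphi\in\mathcal{C}$ there is a sequence $\varphi_n\to\varphi$ in $(\mathcal{C},m)$ with $\limsup_n\mathcal{E}_\mu^{\lambda,\varepsilon_n,p}(\varphi_n)\le E_\mu^{\lambda,p}(\varphi)$.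
   Context: $\mathcal{C}$ denotes the set of curves $\varphi:[0,a]\to\mathbb{R}^d$, $a\ge 0$, that are Lipschitz with $|\varphi'|=1$ a.e.; the length $L(\varphi)$ is its total variation, which equals $a$. $\Gamma_\varphi$ is the image of $\varphi$, $d(x,\Gamma)=\inf_{y\in\Gamma}|x-y|$, and $\kappa_\varphi=\varphi''$. The functional is $\mathcal{E}_\mu^{\lambda,\varepsilon,p}(\varphi)=\int d(x,\Gamma_\varphi)^p\,d\mu+\lambda L(\varphi)+\varepsilon\int_0^{L(\varphi)}|\kappa_\varphi|^2dt$ if $\varphi\in H^2([0,L(\varphi)];\mathbb{R}^d)\cap\mathcal{C}$ and $+\infty$ otherwise (a single-point curve has curvature term $0$). Also $E_\mu^{\lambda,p}(\psi):=\int_{\mathbb{R}^d}d(x,\Gamma_\psi)^p\,d\mu+\lambda L(\psi)$ for $\psi\in\mathcal{C}$. For $\varphi\in\mathcal{C}$, $\Phi(\varphi)(t)=\varphi(tL(\varphi))$, $t\in[0,1]$, and the metric on $\mathcal{C}$ is $m(\varphi,\psi)=\min\{\|\Phi(\varphi)-\Phi(\psi)\|_{L^\infty},\|\Phi(\varphi(L(\varphi)-\cdot))-\Phi(\psi)\|_{L^\infty}\}+|L(\varphi)-L(\psi)|$. *)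

theory Defs
  imports "HOL-Analysis.Analysis"
begin

text \<open>A curve is represented by a pair (a, f): its parameter interval [0,a] and the map f;
only the values of f on [0,a] are relevant.\<close>

type_synonym 'a curve = "real \<times> (real \<Rightarrow> 'a)"

definition curve_len :: "'a curve \<Rightarrow> real" where
  "curve_len c = fst c"

definition curve_image :: "'a::real_normed_vector curve \<Rightarrow> 'a set" where
  "curve_image c = snd c ` {0..fst c}"

definition curves_C :: "'a::euclidean_space curve set" where
  "curves_C = {(a, f). a \<ge> 0 \<and> (\<exists>M. M-lipschitz_on {0..a} f) \<and>
      (AE t in lborel. t \<in> {0<..<a} \<longrightarrow>
         (\<exists>v. (f has_vector_derivative v) (at t) \<and> norm v = 1))}"

text \<open>kappa is a (weak) second derivative of the curve in L^2: f is C^1 on [0,a] with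
derivative v, and v is the integral of kappa, kappa square integrable.\<close>
definition is_curvature :: "'a::euclidean_space curve \<Rightarrow> (real \<Rightarrow> 'a) \<Rightarrow> bool" where
  "is_curvature c \<kappa> \<longleftrightarrow>
     set_integrable lborel {0..fst c} \<kappa> \<and>
     set_integrable lborel {0..fst c} (\<lambda>t. (norm (\<kappa> t))\<^sup>2) \<and>
     (\<exists>v. \<forall>t\<in>{0..fst c}. (snd c has_vector_derivative v t) (at t within {0..fst c}) \<and>
            v t = v 0 + (LINT s:{0..t}|lborel. \<kappa> s))"

definition in_H2 :: "'a::euclidean_space curve \<Rightarrow> bool" where
  "in_H2 c \<longleftrightarrow> (\<exists>\<kappa>. is_curvature c \<kappa>)"

definition curvature_energy :: "'a::euclidean_space curve \<Rightarrow> real" where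
  "curvature_energy c = (LINT t:{0..fst c}|lborel. (norm ((SOME \<kappa>. is_curvature c \<kappa>) t))\<^sup>2)"

definition E_fun :: "'a::euclidean_space measure \<Rightarrow> real \<Rightarrow> real \<Rightarrow> 'a curve \<Rightarrow> ennreal" where
  "E_fun \<mu> lam p c = (\<integral>\<^sup>+ x. ennreal (infdist x (curve_image c) powr p) \<partial>\<mu>) + ennreal (lam * curve_len c)"

definition Eps_fun :: "'a::euclidean_space measure \<Rightarrow> real \<Rightarrow> real \<Rightarrow> real \<Rightarrow> 'a curve \<Rightarrow> ennreal" where
  "Eps_fun \<mu> lam \<epsilon> p c = (if c \<in> curves_C \<and> in_H2 c
     then (\<integral>\<^sup>+ x. ennreal (infdist x (curve_image c) powr p) \<partial>\<mu>) + ennreal (lam * curve_len c)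
          + ennreal (\<epsilon> * curvature_energy c)
     else top)"

definition curve_dist :: "'a::real_normed_vector curve \<Rightarrow> 'a curve \<Rightarrow> real" where
  "curve_dist c1 c2 =
     min (Sup ((\<lambda>t. norm (snd c1 (t * fst c1) - snd c2 (t * fst c2))) ` {0..1}))
         (Sup ((\<lambda>t. norm (snd c1 (fst c1 - t * fst c1) - snd c2 (t * fst c2))) ` {0..1}))
     + \<bar>fst c1 - fst c2\<bar>"

end

theory Submission
  imports Defs
begin

lemma sum_content_le_measure:
  fixes p :: "(real \<times> real set) set"
  assumes p: "p tagged_division_of {a..b}" and q: "q \<subseteq> p"
    and G: "G \<in> lmeasurable" and sub: "\<And>x K. (x,K) \<in> q \<Longrightarrow> K \<subseteq> G"
  shows "(\<Sum>(x,K)\<in>q. measure lborel K) \<le> measure lebesgue G"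
proof -
  have fin: "finite q" using p q tagged_division_of_finite finite_subset by blast
  have Kint: "\<And>x K. (x,K) \<in> p \<Longrightarrow> \<exists>u v. K = cbox u v" using p by (meson tagged_division_ofD(4))
  have "(\<Sum>(x,K)\<in>q. measure lborel K) = (\<Sum>xk\<in>q. measure lebesgue (snd xk))"
  proof (rule sum.cong[OF refl])
    fix xk assume "xk \<in> q"
    then obtain u v where "snd xk = cbox u v" using Kint q by (metis prod.collapse subsetD)
    then show "(case xk of (x, K) \<Rightarrow> measure lborel K) = measure lebesgue (snd xk)"
      by (simp add: split_def)
  qed
  also have "\<dots> = measure lebesgue (\<Union>(snd ` q))"
  proof (rule measure_negligible_finite_Union_image[symmetric, OF fin])
    fix xk assume "xk \<in> q"
    then obtain u v where "snd xk = cbox u v" using Kint q by (metis prod.collapse subsetD)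
    then show "snd xk \<in> lmeasurable" by simp
  next
    show "pairwise (\<lambda>x y. negligible (snd x \<inter> snd y)) q"
      unfolding pairwise_def
    proof (intro ballI impI)
      fix xk yl assume xkq: "xk \<in> q" and ylq: "yl \<in> q" and ne: "xk \<noteq> yl"
      obtain x K where xK0: "xk = (x,K)" by fastforce
      obtain y L where yL0: "yl = (y,L)" by fastforce
      have xK: "(x,K) \<in> q" and yL: "(y,L) \<in> q" using xkq ylq xK0 yL0 by auto
      obtain u v where K: "K = cbox u v" using Kint xK q by blast
      obtain u' v' where L: "L = cbox u' v'" using Kint yL q by blast
      have "interior K \<inter> interior L = {}"
        using p xK yL ne q xK0 yL0 by (meson subsetD tagged_division_ofD(5))
      then have "K \<inter> L \<subseteq> (cbox u v - box u v) \<union> (cbox u' v' - box u' v')"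
        using K L by auto
      moreover have "negligible ((cbox u v - box u v) \<union> (cbox u' v' - box u' v'))"
        using negligible_frontier_interval negligible_Un by blast
      ultimately show "negligible (snd xk \<inter> snd yl)"
        using negligible_subset xK0 yL0 by (metis snd_conv)
    qed
  qed
  also have "\<dots> \<le> measure lebesgue G"
  proof (rule measure_mono_fmeasurable[OF _ _ G])
    show "\<Union>(snd ` q) \<subseteq> G" using sub by fastforce
    have "\<And>xk. xk \<in> q \<Longrightarrow> snd xk \<in> sets lebesgue"
      using Kint q by (metis prod.collapse subsetD lmeasurable_cbox fmeasurableD)
    then show "\<Union>(snd ` q) \<in> sets lebesgue" using fin by auto
  qed
  finally show ?thesis .
qed

lemma ftc_lipschitz:
  fixes f :: "real \<Rightarrow> 'a::euclidean_space"
  assumes ab: "a < b" and lip: "M-lipschitz_on {a..b} f" and negE: "negligible E"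
    and der: "\<And>x. x \<in> {a<..<b} - E \<Longrightarrow> (f has_vector_derivative f' x) (at x)"
    and bnd: "\<And>x. norm (f' x) \<le> B"
  shows "(f' has_integral (f b - f a)) {a..b}"
  unfolding has_integral_factor_content_real
proof (intro allI impI)
  fix e :: real assume e: "e > 0"
  have M0: "M \<ge> 0" using lip lipschitz_on_nonneg by blast
  have B0: "B \<ge> 0" using bnd[of 0] norm_ge_zero order_trans by blast
  define E' where "E' = E \<union> {a,b}"
  have negE': "negligible E'" using negE unfolding E'_def by auto
  define \<eta> where "\<eta> = e * (b-a) / (2 * (B + M + 1))"
  have eta: "\<eta> > 0" using e ab B0 M0 unfolding \<eta>_def by auto
  obtain G where G: "open G" "E' \<subseteq> G" "(G - E') \<in> lmeasurable" "emeasure lebesgue (G - E') < ennreal \<eta>"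
    using sets_lebesgue_outer_open[OF negligible_imp_sets[OF negE'] eta] by blast
  have Gm: "G \<in> lmeasurable"
  proof -
    have "G = (G - E') \<union> E'" using G(2) by auto
    then show ?thesis using G(3) negE' negligible_imp_measurable fmeasurable.Un by metis
  qed
  have mG: "measure lebesgue G < \<eta>"
  proof -
    have "measure lebesgue G = measure lebesgue (G - E')"
      by (rule measure_negligible_symdiff[OF G(3)]) (use negE' in \<open>auto intro: negligible_subset\<close>)
    also have "\<dots> < \<eta>" using G(3,4) eta
      by (simp add: emeasure_eq_measure2 ennreal_less_iff)
    finally show ?thesis .
  qed
  have "\<forall>x. \<exists>d>0. x \<in> {a<..<b} - E \<longrightarrow>
         (\<forall>y. norm (y-x) < d \<longrightarrow> norm (f y - f x - (y-x) *\<^sub>R f' x) \<le> e/4 * norm (y-x))"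
  proof (intro allI)
    fix x
    show "\<exists>d>0. x \<in> {a<..<b} - E \<longrightarrow>
         (\<forall>y. norm (y-x) < d \<longrightarrow> norm (f y - f x - (y-x) *\<^sub>R f' x) \<le> e/4 * norm (y-x))"
    proof (cases "x \<in> {a<..<b} - E")
      case True
      have "e/4 > 0" using e by auto
      then show ?thesis
        using der[OF True, unfolded has_vector_derivative_def has_derivative_at_alt]
        by (metis True)
    qed (auto intro: exI[of _ 1])
  qed
  then obtain d where d: "\<And>x. 0 < d x"
    "\<And>x y. \<lbrakk>x \<in> {a<..<b} - E; norm (y-x) < d x\<rbrakk> \<Longrightarrow> norm (f y - f x - (y-x) *\<^sub>R f' x) \<le> e/4 * norm (y-x)"
    by metis
  have "\<forall>x. \<exists>r>0. x \<in> G \<longrightarrow> ball x r \<subseteq> G"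
    using G(1) open_contains_ball by blast
  then obtain r where r: "\<And>x. r x > 0" "\<And>x. x \<in> G \<Longrightarrow> ball x (r x) \<subseteq> G" by metis
  define \<gamma> where "\<gamma> x = (if x \<in> E' then ball x (r x) else ball x (d x))" for x
  show "\<exists>\<gamma>. gauge \<gamma> \<and> (\<forall>p. p tagged_division_of {a..b} \<and> \<gamma> fine p \<longrightarrow>
      norm ((\<Sum>(x,K)\<in>p. measure lborel K *\<^sub>R f' x) - (f b - f a)) \<le> e * measure lborel {a..b})"
  proof (rule exI[of _ \<gamma>], intro conjI allI impI)
    show "gauge \<gamma>" unfolding gauge_def \<gamma>_def using r(1) d(1) by auto
  next
    fix p assume "p tagged_division_of {a..b} \<and> \<gamma> fine p"
    then have ptag: "p tagged_division_of {a..b}" and finep: "\<gamma> fine p" by auto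
    have ba: "b - a = (\<Sum>(x,K)\<in>p. Sup K - Inf K)" "f b - f a = (\<Sum>(x,K)\<in>p. f(Sup K) - f(Inf K))"
      using additive_tagged_division_1[where f= "\<lambda>x. x"] additive_tagged_division_1[where f= f]
            ab ptag by (metis less_imp_le)+
    define q where "q = {(x,K)\<in>p. x \<in> E'}"
    have bound: "norm (measure lborel K *\<^sub>R f' x - (f (Sup K) - f (Inf K)))
          \<le> (B + M) * (if x \<in> E' then measure lborel K else 0) + e/4 * measure lborel K"
      if xK: "(x,K) \<in> p" for x K
    proof -
      have "x \<in> K" and kab: "K \<subseteq> {a..b}" using ptag xK by blast+
      then obtain u v where k: "K = cbox u v" using ptag xK by (meson tagged_division_ofD(4))
      have uv: "u \<le> v" using \<open>x \<in> K\<close> unfolding k by auto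
      have uK: "u \<in> K" "v \<in> K" using uv k by auto
      have SI: "Sup K = v" "Inf K = u" "measure lborel K = v - u" using uv k by auto
      have ball: "K \<subseteq> \<gamma> x" using finep xK unfolding fine_def by fastforce
      show ?thesis
      proof (cases "x \<in> E'")
        case True
        have "norm ((v - u) *\<^sub>R f' x - (f v - f u)) \<le> norm ((v - u) *\<^sub>R f' x) + norm (f v - f u)"
          by (rule norm_triangle_ineq4)
        also have "\<dots> \<le> (v - u) * B + M * (v - u)"
        proof (rule add_mono)
          show "norm ((v - u) *\<^sub>R f' x) \<le> (v - u) * B" using uv bnd[of x]
            by (simp add: mult_left_mono)
          show "norm (f v - f u) \<le> M * (v - u)"
            using lipschitz_onD[OF lip, of v u] uK kab uv by (force simp add: dist_norm dist_real_def)
        qed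
        finally have 1: "norm ((v - u) *\<^sub>R f' x - (f v - f u)) \<le> (v - u) * B + M * (v - u)" .
        have "(v - u) * B + M * (v - u) \<le> (B + M) * (v - u) + e/4 * (v - u)"
          using e uv by (simp add: algebra_simps)
        with 1 show ?thesis using True unfolding SI by simp
      next
        case False
        then have xin: "x \<in> {a<..<b} - E" using kab \<open>x \<in> K\<close> unfolding E'_def by auto
        have balld: "\<forall>y\<in>K. norm (y - x) < d x" using ball False unfolding \<gamma>_def
          by (auto simp: dist_real_def)
        have "norm ((v - u) *\<^sub>R f' x - (f v - f u)) = norm (f u - f x - (u - x) *\<^sub>R f' x - (f v - f x - (v - x) *\<^sub>R f' x))"
          by (auto simp: algebra_simps)
        also have "\<dots> \<le> norm (f u - f x - (u - x) *\<^sub>R f' x) + norm (f v - f x - (v - x) *\<^sub>R f' x)"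
          by (rule norm_triangle_ineq4)
        also have "\<dots> \<le> e/4 * norm (u - x) + e/4 * norm (v - x)"
          using d(2)[OF xin] balld uK by (meson add_mono)
        also have "\<dots> = e/4 * (v - u)"
          using \<open>x \<in> K\<close> k by (auto simp: field_simps)
        finally show ?thesis using False unfolding SI by simp
      qed
    qed
    have "norm ((\<Sum>(x,K)\<in>p. measure lborel K *\<^sub>R f' x) - (f b - f a))
        = norm (\<Sum>(x, K) \<in> p. (measure lborel K *\<^sub>R f' x) - (f (Sup K) - f (Inf K)))"
      by (simp add: ba split_def sum_subtractf)
    also have "\<dots> \<le> (\<Sum>(x,K)\<in>p. (B + M) * (if x \<in> E' then measure lborel K else 0) + e/4 * measure lborel K)"
      by (rule sum_norm_le) (use bound in auto)
    also have "\<dots> = (B + M) * (\<Sum>(x,K)\<in>p. (if x \<in> E' then measure lborel K else 0)) + e/4 * (\<Sum>(x,K)\<in>p. measure lborel K)"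
      by (simp add: split_def sum.distrib sum_distrib_left)
    also have "(\<Sum>(x,K)\<in>p. (if x \<in> E' then measure lborel K else 0)) = (\<Sum>(x,K)\<in>q. measure lborel K)"
    proof -
      have "finite p" using ptag by blast
      then show ?thesis unfolding q_def
        by (simp add: split_def sum.inter_filter[symmetric] case_prod_beta)
    qed
    also have "(\<Sum>(x,K)\<in>q. measure lborel K) \<le> measure lebesgue G"
    proof (rule sum_content_le_measure[OF ptag _ Gm])
      show "q \<subseteq> p" unfolding q_def by auto
      fix x K assume "(x,K) \<in> q"
      then have "x \<in> E'" "(x,K) \<in> p" unfolding q_def by auto
      then have "K \<subseteq> ball x (r x)" using finep unfolding \<gamma>_def fine_def by force
      also have "\<dots> \<subseteq> G" using r(2) G(2) \<open>x \<in> E'\<close> by auto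
      finally show "K \<subseteq> G" .
    qed
    also have "(\<Sum>(x,K)\<in>p. measure lborel K) = b - a"
      using additive_content_tagged_division[of p a b] ptag ab by simp
    finally have *: "norm ((\<Sum>(x,K)\<in>p. measure lborel K *\<^sub>R f' x) - (f b - f a))
        \<le> (B + M) * measure lebesgue G + e/4 * (b - a)" using B0 M0 by (simp add: mult_left_mono)
    have "(B + M) * measure lebesgue G \<le> (B + M + 1) * \<eta>"
      using mG B0 M0 measure_nonneg[of lebesgue G] by (intro mult_mono) auto
    also have "\<dots> = e * (b - a) / 2" unfolding \<eta>_def using B0 M0 by (simp add: field_simps)
    finally have **: "(B + M) * measure lebesgue G \<le> e * (b - a) / 2" .
    have pos: "e * (b - a) > 0" using e ab by simp
    have ml: "measure lborel {a..b} = b - a" using ab by simp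
    show "norm ((\<Sum>(x,K)\<in>p. measure lborel K *\<^sub>R f' x) - (f b - f a)) \<le> e * measure lborel {a..b}"
      unfolding ml using * ** pos by linarith
  qed
qed

lemma L1_approx_indicator:
  fixes c :: "'b::euclidean_space" and A :: "real set"
  assumes A: "A \<in> sets lebesgue" and e: "e > 0"
  shows "\<exists>g. continuous_on UNIV g \<and>
     (\<integral>\<^sup>+x. ennreal (norm (indicator A x *\<^sub>R c - g x)) \<partial>lebesgue) < ennreal e"
proof -
  define \<eta> where "\<eta> = e / (2 * (norm c + 1))"
  have eta: "\<eta> > 0" using e unfolding \<eta>_def by (intro divide_pos_pos) (auto intro: add_nonneg_pos)
  obtain T where T: "open T" "A \<subseteq> T" "(T - A) \<in> lmeasurable" "emeasure lebesgue (T - A) < ennreal \<eta>"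
    using sets_lebesgue_outer_open[OF A eta] by blast
  obtain F where F: "closed F" "F \<subseteq> A" "A - F \<in> lmeasurable" "emeasure lebesgue (A - F) < ennreal \<eta>"
    using sets_lebesgue_inner_closed[OF A eta] by blast
  obtain g :: "real \<Rightarrow> 'b" where g: "continuous_on UNIV g" "\<And>x. g x \<in> closed_segment c 0"
    "\<And>x. x \<in> F \<Longrightarrow> g x = c" "\<And>x. x \<in> - T \<Longrightarrow> g x = 0"
  proof -
    have cl: "closed (- T)" using T(1) by auto
    have dj: "F \<inter> - T = {}" using F(2) T(2) by auto
    show ?thesis by (rule Urysohn[OF F(1) cl dj, of c 0]) (rule that; assumption)+
  qed
  have TF: "T - F \<in> sets lebesgue" using T(1) F(1) by (simp add: borel_open borel_closed sets.Diff)
  have pt: "ennreal (norm (indicator A x *\<^sub>R c - g x)) \<le> ennreal (norm c) * indicator (T - F) x" for x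
  proof (cases "x \<in> T - F")
    case True
    obtain t where t: "0 \<le> t" "t \<le> 1" "g x = (1 - t) *\<^sub>R c"
      using g(2)[of x] unfolding closed_segment_def by auto
    have "indicator A x *\<^sub>R c - g x = (indicator A x - (1 - t)) *\<^sub>R c"
      unfolding t(3) by (rule scaleR_diff_left[symmetric])
    then have "norm (indicator A x *\<^sub>R c - g x) = \<bar>indicator A x - (1 - t)\<bar> * norm c"
      by simp
    also have "\<dots> \<le> 1 * norm c"
      using t by (intro mult_right_mono) (auto simp: indicator_def)
    finally have "norm (indicator A x *\<^sub>R c - g x) \<le> norm c" by simp
    then show ?thesis using True by simp
  next
    case False
    then have "x \<in> F \<or> x \<notin> T" by auto
    then have "indicator A x *\<^sub>R c - g x = 0"
      using g(3,4) F(2) T(2) by (auto simp: indicator_def)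
    then show ?thesis by simp
  qed
  have "(\<integral>\<^sup>+x. ennreal (norm (indicator A x *\<^sub>R c - g x)) \<partial>lebesgue)
      \<le> (\<integral>\<^sup>+x. ennreal (norm c) * indicator (T - F) x \<partial>lebesgue)"
    by (rule nn_integral_mono) (use pt in auto)
  also have "\<dots> = ennreal (norm c) * emeasure lebesgue (T - F)"
    using TF by (rule nn_integral_cmult_indicator)
  also have "emeasure lebesgue (T - F) \<le> ennreal (2 * \<eta>)"
  proof -
    have "T - F \<subseteq> (T - A) \<union> (A - F)" by auto
    then have "emeasure lebesgue (T - F) \<le> emeasure lebesgue ((T - A) \<union> (A - F))"
      by (intro emeasure_mono) (use T(3) F(3) in auto)
    also have "\<dots> \<le> emeasure lebesgue (T - A) + emeasure lebesgue (A - F)"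
      by (intro emeasure_subadditive) (use T(3) F(3) in auto)
    also have "\<dots> < ennreal \<eta> + ennreal \<eta>"
      using T(4) F(4) by (rule add_strict_mono)
    also have "\<dots> = ennreal (2 * \<eta>)" using eta by (simp add: ennreal_plus[symmetric] del: ennreal_plus)
    finally show ?thesis by simp
  qed
  finally have "(\<integral>\<^sup>+x. ennreal (norm (indicator A x *\<^sub>R c - g x)) \<partial>lebesgue)
      \<le> ennreal (norm c) * ennreal (2 * \<eta>)"
    by (simp add: mult_left_mono)
  also have "\<dots> = ennreal (norm c * (2 * \<eta>))"
    using eta by (simp add: ennreal_mult)
  also have "\<dots> < ennreal e"
  proof -
    have nc: "norm c + 1 > 0" by (smt (verit) norm_ge_zero)
    have "norm c * (2 * \<eta>) = e * norm c / (norm c + 1)"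
      unfolding \<eta>_def using nc by (simp add: field_simps)
    also have "\<dots> < e" using e nc by (simp add: divide_less_eq)
    finally show ?thesis using e by (simp add: ennreal_lessI)
  qed
  finally show ?thesis using g(1) by blast
qed

lemma nn_integral_norm_triangle:
  fixes f g h :: "real \<Rightarrow> 'b::euclidean_space"
  assumes [measurable]: "f \<in> borel_measurable M" "g \<in> borel_measurable M" "h \<in> borel_measurable M"
  shows "(\<integral>\<^sup>+x. ennreal (norm (f x - h x)) \<partial>M)
     \<le> (\<integral>\<^sup>+x. ennreal (norm (f x - g x)) \<partial>M) + (\<integral>\<^sup>+x. ennreal (norm (g x - h x)) \<partial>M)"
proof -
  have "(\<integral>\<^sup>+x. ennreal (norm (f x - h x)) \<partial>M) \<le> (\<integral>\<^sup>+x. ennreal (norm (f x - g x)) + ennreal (norm (g x - h x)) \<partial>M)"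
  proof (intro nn_integral_mono)
    fix x
    have "norm (f x - h x) \<le> norm (f x - g x) + norm (g x - h x)"
      by (rule norm_diff_triangle_le) auto
    then show "ennreal (norm (f x - h x)) \<le> ennreal (norm (f x - g x)) + ennreal (norm (g x - h x))"
      by (simp add: ennreal_plus[symmetric] del: ennreal_plus)
  qed
  also have "\<dots> = (\<integral>\<^sup>+x. ennreal (norm (f x - g x)) \<partial>M) + (\<integral>\<^sup>+x. ennreal (norm (g x - h x)) \<partial>M)"
    by (rule nn_integral_add) auto
  finally show ?thesis .
qed

lemma L1_approx_continuous:
  fixes h :: "real \<Rightarrow> 'b::euclidean_space"
  assumes hi: "integrable (lebesgue_on S) h" and S: "S \<in> sets lebesgue"
  shows "\<forall>e>0. \<exists>g. continuous_on UNIV g \<and> (\<integral>\<^sup>+x. ennreal (norm (h x - g x)) \<partial>(lebesgue_on S)) < ennreal e"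
  using hi
proof (induct rule: integrable_induct)
  case (base A c)
  show ?case
  proof (intro allI impI)
    fix e :: real assume e: "e > 0"
    have A: "A \<in> sets lebesgue" using base(1) S by (simp add: sets_restrict_space_iff)
    obtain g where g: "continuous_on UNIV g"
      "(\<integral>\<^sup>+x. ennreal (norm (indicator A x *\<^sub>R c - g x)) \<partial>lebesgue) < ennreal e"
      using L1_approx_indicator[OF A e, of c] by blast
    have "(\<integral>\<^sup>+x. ennreal (norm (indicator A x *\<^sub>R c - g x)) \<partial>(lebesgue_on S))
       = (\<integral>\<^sup>+x. ennreal (norm (indicator A x *\<^sub>R c - g x)) * indicator S x \<partial>lebesgue)"
      using S by (simp add: nn_integral_restrict_space)
    also have "\<dots> \<le> (\<integral>\<^sup>+x. ennreal (norm (indicator A x *\<^sub>R c - g x)) \<partial>lebesgue)"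
      by (intro nn_integral_mono) (simp add: indicator_def)
    finally show "\<exists>g. continuous_on UNIV g \<and>
        (\<integral>\<^sup>+x. ennreal (norm (indicator A x *\<^sub>R c - g x)) \<partial>(lebesgue_on S)) < ennreal e"
      using g by (meson order.strict_trans1)
  qed
next
  case (add f1 f2)
  show ?case
  proof (intro allI impI)
    fix e :: real assume e: "e > 0"
    then have e2: "e/2 > 0" by simp
    obtain g1 where g1: "continuous_on UNIV g1" "(\<integral>\<^sup>+x. ennreal (norm (f1 x - g1 x)) \<partial>(lebesgue_on S)) < ennreal (e/2)"
      using add(2) e2 by blast
    obtain g2 where g2: "continuous_on UNIV g2" "(\<integral>\<^sup>+x. ennreal (norm (f2 x - g2 x)) \<partial>(lebesgue_on S)) < ennreal (e/2)"
      using add(4) e2 by blast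
    have m1: "g1 \<in> borel_measurable (lebesgue_on S)" "g2 \<in> borel_measurable (lebesgue_on S)"
      using g1(1) g2(1) S continuous_imp_measurable_on_sets_lebesgue continuous_on_subset by blast+
    have m2: "f1 \<in> borel_measurable (lebesgue_on S)" "f2 \<in> borel_measurable (lebesgue_on S)"
      using add(1,3) by auto
    have "(\<integral>\<^sup>+x. ennreal (norm ((f1 x + f2 x) - (g1 x + g2 x))) \<partial>(lebesgue_on S))
       \<le> (\<integral>\<^sup>+x. ennreal (norm (f1 x - g1 x)) + ennreal (norm (f2 x - g2 x)) \<partial>(lebesgue_on S))"
      by (intro nn_integral_mono)
         (simp add: ennreal_plus[symmetric] del: ennreal_plus add: norm_diff_triangle_le norm_triangle_ineq[THEN order_trans] algebra_simps
           | metis add_diff_add norm_triangle_ineq)+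
    also have "\<dots> = (\<integral>\<^sup>+x. ennreal (norm (f1 x - g1 x)) \<partial>(lebesgue_on S)) + (\<integral>\<^sup>+x. ennreal (norm (f2 x - g2 x)) \<partial>(lebesgue_on S))"
      by (rule nn_integral_add) (use m1 m2 in auto)
    also have "\<dots> < ennreal (e/2) + ennreal (e/2)"
      using g1(2) g2(2) by (rule add_strict_mono)
    also have "\<dots> = ennreal e" using e by (simp add: ennreal_plus[symmetric] del: ennreal_plus)
    finally show "\<exists>g. continuous_on UNIV g \<and>
        (\<integral>\<^sup>+x. ennreal (norm ((f1 x + f2 x) - g x)) \<partial>(lebesgue_on S)) < ennreal e"
      using g1(1) g2(1) continuous_on_add by blast
  qed
next
  case (lim f s)
  show ?case
  proof (intro allI impI)
    fix e :: real assume e: "e > 0"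
    then have e2: "e/2 > 0" by simp
    have fm: "f \<in> borel_measurable (lebesgue_on S)" using lim(5) by auto
    have sm: "\<And>i. s i \<in> borel_measurable (lebesgue_on S)" using lim(1) by auto
    have conv: "(\<lambda>i. (\<integral>\<^sup>+x. ennreal (norm (f x - s i x)) \<partial>(lebesgue_on S))) \<longlonglongrightarrow> 0"
    proof (rule nn_integral_dominated_convergence_norm[where w="\<lambda>x. 2 * norm (f x)"])
      show "(\<lambda>x. 2 * norm (f x)) \<in> borel_measurable (lebesgue_on S)" using fm by measurable
      show "\<And>j. AE x in lebesgue_on S. norm (s j x) \<le> 2 * norm (f x)" using lim(4) by auto
      show "(\<integral>\<^sup>+x. ennreal (2 * norm (f x)) \<partial>(lebesgue_on S)) < \<infinity>"
      proof -
        have "(\<integral>\<^sup>+x. ennreal (2 * norm (f x)) \<partial>(lebesgue_on S)) = 2 * (\<integral>\<^sup>+x. ennreal (norm (f x)) \<partial>(lebesgue_on S))"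
          using fm by (simp add: ennreal_mult nn_integral_cmult)
        moreover have "(\<integral>\<^sup>+x. ennreal (norm (f x)) \<partial>(lebesgue_on S)) < \<infinity>"
          using lim(5) by (simp add: integrable_iff_bounded)
        ultimately show ?thesis by (simp add: ennreal_mult_less_top)
      qed
      show "AE x in lebesgue_on S. (\<lambda>i. s i x) \<longlonglongrightarrow> f x" using lim(3) by auto
    qed (use fm sm in auto)
    then have "eventually (\<lambda>i. (\<integral>\<^sup>+x. ennreal (norm (f x - s i x)) \<partial>(lebesgue_on S)) < ennreal (e/2)) sequentially"
      using e2 by (intro order_tendstoD(2)) auto
    then obtain i where i: "(\<integral>\<^sup>+x. ennreal (norm (f x - s i x)) \<partial>(lebesgue_on S)) < ennreal (e/2)"
      by (meson eventually_sequentially order_refl)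
    obtain g where g: "continuous_on UNIV g" "(\<integral>\<^sup>+x. ennreal (norm (s i x - g x)) \<partial>(lebesgue_on S)) < ennreal (e/2)"
      using lim(2) e2 by blast
    have gm: "g \<in> borel_measurable (lebesgue_on S)"
      using g(1) S continuous_imp_measurable_on_sets_lebesgue continuous_on_subset by blast
    have "(\<integral>\<^sup>+x. ennreal (norm (f x - g x)) \<partial>(lebesgue_on S))
      \<le> (\<integral>\<^sup>+x. ennreal (norm (f x - s i x)) \<partial>(lebesgue_on S)) + (\<integral>\<^sup>+x. ennreal (norm (s i x - g x)) \<partial>(lebesgue_on S))"
      by (rule nn_integral_norm_triangle) (use fm sm gm in auto)
    also have "\<dots> < ennreal (e/2) + ennreal (e/2)"
      using i g(2) by (rule add_strict_mono)
    also have "\<dots> = ennreal e" using e by (simp add: ennreal_plus[symmetric] del: ennreal_plus)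
    finally show "\<exists>g. continuous_on UNIV g \<and>
        (\<integral>\<^sup>+x. ennreal (norm (f x - g x)) \<partial>(lebesgue_on S)) < ennreal e"
      using g(1) by blast
  qed
qed

lemma normalize_deriv:
  fixes w :: "real \<Rightarrow> 'a::euclidean_space"
  assumes wd: "(w has_vector_derivative w' t) (at t)" and nz: "w t \<noteq> 0"
  shows "((\<lambda>s. inverse (norm (w s)) *\<^sub>R w s) has_vector_derivative
     (inverse (norm (w t)) *\<^sub>R w' t - ((w t \<bullet> w' t) / (norm (w t)) ^ 3) *\<^sub>R w t)) (at t)"
proof -
  have nd: "((\<lambda>s. norm (w s)) has_real_derivative ((w t \<bullet> w' t) / norm (w t))) (at t)"
  proof -
    have "(norm has_derivative (\<lambda>h. sgn (w t) \<bullet> h)) (at (w t))"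
      using has_derivative_norm[OF nz] by (simp add: inner_commute)
    then have "((\<lambda>s. norm (w s)) has_derivative (\<lambda>h. sgn (w t) \<bullet> (h *\<^sub>R w' t))) (at t)"
      using has_derivative_compose[OF wd[unfolded has_vector_derivative_def]] by blast
    then have "((\<lambda>s. norm (w s)) has_derivative (\<lambda>h. ((w t \<bullet> w' t) / norm (w t)) * h)) (at t)"
      by (rule has_derivative_eq_rhs) (auto simp: sgn_div_norm inner_commute field_simps)
    then show ?thesis
      unfolding has_field_derivative_def by (rule has_derivative_eq_rhs) auto
  qed
  have id: "((\<lambda>s. inverse (norm (w s))) has_real_derivative (- ((w t \<bullet> w' t) / norm (w t)) / (norm (w t))^2)) (at t)"
    using DERIV_inverse_fun[OF nd] nz by (simp add: power2_eq_square field_simps)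
  have "((\<lambda>s. inverse (norm (w s)) *\<^sub>R w s) has_vector_derivative
     (inverse (norm (w t)) *\<^sub>R w' t + (- ((w t \<bullet> w' t) / norm (w t)) / (norm (w t))^2) *\<^sub>R w t)) (at t)"
    by (rule has_vector_derivative_scaleR[OF id wd, THEN has_vector_derivative_eq_rhs]) simp
  moreover have "(- ((w t \<bullet> w' t) / norm (w t)) / (norm (w t))^2) = - ((w t \<bullet> w' t) / (norm (w t)) ^ 3)"
    using nz by (simp add: power2_eq_square power3_eq_cube field_simps)
  ultimately show ?thesis
    by (metis (no_types, lifting) minus_real_def scaleR_left.minus diff_conv_add_uminus add_uminus_conv_diff scaleR_minus_left)
qed

lemma construct_curve:
  fixes w w' :: "real \<Rightarrow> 'a::euclidean_space"
  assumes a: "a \<ge> 0" and wd: "\<And>t. (w has_vector_derivative w' t) (at t)"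
    and w'c: "continuous_on UNIV w'" and nz: "\<And>t. w t \<noteq> 0"
  shows "(a, (\<lambda>s. f0 + integral {0..s} (\<lambda>t. inverse (norm (w t)) *\<^sub>R w t))) \<in> curves_C"
    "in_H2 (a, (\<lambda>s. f0 + integral {0..s} (\<lambda>t. inverse (norm (w t)) *\<^sub>R w t)))"
proof -
  define v where "v = (\<lambda>t. inverse (norm (w t)) *\<^sub>R w t)"
  define \<psi> where "\<psi> = (\<lambda>s. f0 + integral {0..s} v)"
  define \<kappa> where "\<kappa> = (\<lambda>t. inverse (norm (w t)) *\<^sub>R w' t - ((w t \<bullet> w' t) / (norm (w t)) ^ 3) *\<^sub>R w t)"
  have wc: "continuous_on UNIV w"
    using wd by (meson continuous_at_imp_continuous_on has_vector_derivative_continuous)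
  have vc: "continuous_on UNIV v" unfolding v_def
    by (intro continuous_intros wc) (auto simp: nz)
  have \<kappa>c: "continuous_on UNIV \<kappa>" unfolding \<kappa>_def
    by (intro continuous_intros wc w'c) (auto simp: nz)
  have nv: "norm (v t) = 1" for t unfolding v_def using nz[of t] by simp
  have vd: "(v has_vector_derivative \<kappa> t) (at t)" for t
    unfolding v_def \<kappa>_def by (rule normalize_deriv[OF wd nz])
  have \<psi>d: "(\<psi> has_vector_derivative v t) (at t within {0..b})" if "t \<in> {0..b}" for t b
  proof -
    have "continuous_on {0..b} v" using vc continuous_on_subset by blast
    from has_vector_derivative_add[OF has_vector_derivative_const[of f0] integral_has_vector_derivative[OF this that]]
    show ?thesis unfolding \<psi>_def by simp
  qed
  have \<psi>d_at: "(\<psi> has_vector_derivative v t) (at t)" if "t > 0" for t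
  proof -
    have "t \<in> interior {0..t+1}" using that by simp
    then have "at t within {0..t+1} = at t" by (rule at_within_interior)
    then show ?thesis using \<psi>d[of t "t+1"] that by simp
  qed
  have lip: "1-lipschitz_on {0..a} \<psi>"
  proof (rule bounded_derivative_imp_lipschitz[where f'="\<lambda>t h. h *\<^sub>R v t"])
    show "(\<psi> has_derivative (\<lambda>h. h *\<^sub>R v x)) (at x within {0..a})" if "x \<in> {0..a}" for x
      using \<psi>d[OF that] by (simp add: has_vector_derivative_def)
    show "onorm (\<lambda>h. h *\<^sub>R v x) \<le> 1" for x using nv[of x] by (simp add: onorm_scaleR_left onorm_id)
  qed auto
  show "(a, (\<lambda>s. f0 + integral {0..s} (\<lambda>t. inverse (norm (w t)) *\<^sub>R w t))) \<in> curves_C"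
    unfolding curves_C_def v_def[symmetric] \<psi>_def[symmetric]
    using a lip \<psi>d_at nv by (auto intro!: AE_I2)
  have "is_curvature (a, \<psi>) \<kappa>"
    unfolding is_curvature_def fst_conv snd_conv
  proof (intro conjI exI[of _ v] ballI)
    show "set_integrable lborel {0..a} \<kappa>"
      by (rule borel_integrable_atLeastAtMost') (use \<kappa>c continuous_on_subset in blast)
    show "set_integrable lborel {0..a} (\<lambda>t. (norm (\<kappa> t))\<^sup>2)"
      by (rule borel_integrable_atLeastAtMost') (intro continuous_intros, use \<kappa>c continuous_on_subset in blast)
    fix t assume t: "t \<in> {0..a}"
    show "(\<psi> has_vector_derivative v t) (at t within {0..a})" using \<psi>d[OF t] .
    have si: "set_integrable lborel {0..t} \<kappa>"
      by (rule borel_integrable_atLeastAtMost') (use \<kappa>c continuous_on_subset in blast)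
    have "(\<kappa> has_integral (v t - v 0)) {0..t}"
      using t by (intro fundamental_theorem_of_calculus) (auto intro: vd has_vector_derivative_at_within)
    then have "(LINT s:{0..t}|lborel. \<kappa> s) = v t - v 0"
      using set_borel_integral_eq_integral(2)[OF si] by (simp add: integral_unique)
    then show "v t = v 0 + (LINT s:{0..t}|lborel. \<kappa> s)" by simp
  qed
  then show "in_H2 (a, (\<lambda>s. f0 + integral {0..s} (\<lambda>t. inverse (norm (w t)) *\<^sub>R w t)))"
    unfolding in_H2_def v_def[symmetric] \<psi>_def[symmetric] by blast
qed

lemma smooth_unit_approx:
  fixes u :: "real \<Rightarrow> 'a::euclidean_space"
  assumes dim: "DIM('a) \<ge> 2" and a: "a \<ge> 0" and ui: "u integrable_on {0..a}"
    and ub: "\<And>t. norm (u t) \<le> 1" and e: "e > 0"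
  obtains w w' where "\<And>t. (w has_vector_derivative w' t) (at t)" "continuous_on UNIV w'" "\<And>t. w t \<noteq> 0"
     "(\<lambda>t. norm (u t - w t)) integrable_on {0..a}" "integral {0..a} (\<lambda>t. norm (u t - w t)) < e"
proof -
  have S: "{0..a} \<in> sets lebesgue" by simp
  have uabs: "u absolutely_integrable_on {0..a}"
    by (rule absolutely_integrable_integrable_bound[where g="\<lambda>_. 1"]) (use ub ui in auto)
  have uL: "integrable (lebesgue_on {0..a}) u"
    using uabs S by (simp add: set_integrable_def integrable_restrict_space)
  have e3: "e/3 > 0" using e by simp
  obtain g where gc: "continuous_on UNIV g"
    and gL: "(\<integral>\<^sup>+x. ennreal (norm (u x - g x)) \<partial>(lebesgue_on {0..a})) < ennreal (e/3)"
    using L1_approx_continuous[OF uL S] e3 by blast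
  define \<delta> where "\<delta> = e / (3 * (a + 1))"
  have \<delta>: "\<delta> > 0" unfolding \<delta>_def using e a by simp
  obtain p where p: "polynomial_function p" "\<And>x. x \<in> {0..a} \<Longrightarrow> norm (g x - p x) < \<delta>"
  proof -
    have "continuous_on {0..a} g" using gc continuous_on_subset by blast
    from Stone_Weierstrass_polynomial_function[OF compact_Icc this \<delta>] show ?thesis using that by blast
  qed
  have neg: "negligible (range p)"
    using dim p(1) by (intro negligible_differentiable_image_lowdim) (auto intro: differentiable_on_polynomial_function)
  obtain c where c: "c \<in> ball 0 \<delta>" "c \<notin> range p"
  proof -
    have "\<not> ball (0::'a) \<delta> \<subseteq> range p"
      using neg \<delta> open_not_negligible[of "ball (0::'a) \<delta>"] negligible_subset by auto
    then show ?thesis using that by blast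
  qed
  obtain p' where p': "polynomial_function p'" "\<And>x. (p has_vector_derivative (p' x)) (at x)"
    using has_vector_derivative_polynomial_function[OF p(1)] by blast
  define w where "w = (\<lambda>t. p t - c)"
  have wd: "(w has_vector_derivative p' t) (at t)" for t
    unfolding w_def using has_vector_derivative_diff[OF p'(2)[of t] has_vector_derivative_const[of c]] by simp
  have p'c: "continuous_on UNIV p'" using p'(1) by (rule continuous_on_polymonial_function)
  have nz: "w t \<noteq> 0" for t unfolding w_def using c(2) by auto
  have wc: "continuous_on UNIV w" unfolding w_def using p(1)
    by (intro continuous_intros continuous_on_polymonial_function)
  have gw: "norm (g x - w x) \<le> 2 * \<delta>" if "x \<in> {0..a}" for x
  proof -
    have "norm (g x - w x) \<le> norm (g x - p x) + norm c"
    proof -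
      have "g x - w x = (g x - p x) + c" unfolding w_def by simp
      then show ?thesis by (metis norm_triangle_ineq)
    qed
    also have "\<dots> \<le> 2 * \<delta>" using p(2)[OF that] c(1) by simp
    finally show ?thesis .
  qed
  have wm: "w \<in> borel_measurable (lebesgue_on {0..a})" "g \<in> borel_measurable (lebesgue_on {0..a})"
    using wc gc S continuous_imp_measurable_on_sets_lebesgue continuous_on_subset by blast+
  have um: "u \<in> borel_measurable (lebesgue_on {0..a})" using uL by auto
  have tri: "(\<integral>\<^sup>+x. ennreal (norm (u x - w x)) \<partial>(lebesgue_on {0..a}))
     \<le> (\<integral>\<^sup>+x. ennreal (norm (u x - g x)) \<partial>(lebesgue_on {0..a})) + (\<integral>\<^sup>+x. ennreal (norm (g x - w x)) \<partial>(lebesgue_on {0..a}))"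
    by (rule nn_integral_norm_triangle) (use wm um in auto)
  have gwb: "(\<integral>\<^sup>+x. ennreal (norm (g x - w x)) \<partial>(lebesgue_on {0..a})) \<le> ennreal (2 * \<delta> * a)"
  proof -
    have "(\<integral>\<^sup>+x. ennreal (norm (g x - w x)) \<partial>(lebesgue_on {0..a})) \<le> (\<integral>\<^sup>+x. ennreal (2 * \<delta>) \<partial>(lebesgue_on {0..a}))"
      by (intro nn_integral_mono) (use gw in \<open>auto intro: ennreal_leI\<close>)
    also have "\<dots> = ennreal (2 * \<delta> * a)"
    proof -
      have "emeasure (lebesgue_on {0..a}) {0..a} = emeasure lebesgue {0..a}"
        by (rule emeasure_restrict_space) auto
      also have "\<dots> = emeasure lborel {0..a}" by (simp add: emeasure_completion)
      also have "\<dots> = ennreal a" using a by simp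
      finally have "emeasure (lebesgue_on {0..a}) (space (lebesgue_on {0..a})) = ennreal a" by simp
      then show ?thesis using a \<delta> by (simp add: ennreal_mult)
    qed
    finally show ?thesis .
  qed
  have "(\<integral>\<^sup>+x. ennreal (norm (u x - w x)) \<partial>(lebesgue_on {0..a})) \<le> (\<integral>\<^sup>+x. ennreal (norm (u x - g x)) \<partial>(lebesgue_on {0..a})) + ennreal (2 * \<delta> * a)"
    using tri gwb by (meson add_left_mono order_trans)
  also have "(\<integral>\<^sup>+x. ennreal (norm (u x - g x)) \<partial>(lebesgue_on {0..a})) + ennreal (2 * \<delta> * a) < ennreal (e/3) + ennreal (2 * \<delta> * a)"
    using gL by (simp add: ennreal_add_left_cancel_less add.commute)
  also have "\<dots> = ennreal (e/3 + 2 * \<delta> * a)" using e a \<delta> by (simp add: ennreal_plus[symmetric] del: ennreal_plus)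
  finally have fin: "(\<integral>\<^sup>+x. ennreal (norm (u x - w x)) \<partial>(lebesgue_on {0..a})) < ennreal (e/3 + 2 * \<delta> * a)" .
  have wL: "integrable (lebesgue_on {0..a}) w"
  proof -
    have "continuous_on {0..a} w" using wc continuous_on_subset by blast
    then have "w absolutely_integrable_on {0..a}"
      by (simp add: absolutely_integrable_continuous_real)
    then show ?thesis using S by (simp add: set_integrable_def integrable_restrict_space)
  qed
  have nL: "integrable (lebesgue_on {0..a}) (\<lambda>t. norm (u t - w t))"
    using uL wL by auto
  have eq: "(\<integral>\<^sup>+x. ennreal (norm (u x - w x)) \<partial>(lebesgue_on {0..a})) = ennreal (integral {0..a} (\<lambda>t. norm (u t - w t)))"
    using nn_integral_eq_integral[OF nL] lebesgue_integral_eq_integral[OF nL S] by simp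
  have I0: "integral {0..a} (\<lambda>t. norm (u t - w t)) \<ge> 0"
    using integrable_on_lebesgue_on[OF nL] by (intro integral_nonneg) auto
  from fin[unfolded eq] have "ennreal (integral {0..a} (\<lambda>t. norm (u t - w t))) < ennreal (e/3 + 2 * \<delta> * a)" .
  then have lt: "integral {0..a} (\<lambda>t. norm (u t - w t)) < e/3 + 2 * \<delta> * a"
    using ennreal_less_iff[OF I0] by blast
  have "2 * \<delta> * a \<le> 2 * e / 3"
  proof -
    have "2 * \<delta> * a = 2 * e / 3 * (a / (a + 1))" unfolding \<delta>_def using a by (simp add: field_simps)
    also have "\<dots> \<le> 2 * e / 3 * 1" using a e by (intro mult_left_mono) auto
    finally show ?thesis by simp
  qed
  with lt have "integral {0..a} (\<lambda>t. norm (u t - w t)) < e" by simp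
  moreover have "(\<lambda>t. norm (u t - w t)) integrable_on {0..a}" using nL S by (rule integrable_on_lebesgue_on)
  ultimately show ?thesis using that wd p'c nz by blast
qed

lemma curve_rep:
  fixes f :: "real \<Rightarrow> 'a::euclidean_space"
  assumes C: "(a, f) \<in> curves_C"
  obtains u where "\<And>t. norm (u t) \<le> 1" "\<And>t. t \<in> {0..a} \<Longrightarrow> (u has_integral (f t - f 0)) {0..t}"
    "negligible {t \<in> {0..a}. norm (u t) \<noteq> 1}"
proof -
  have a: "a \<ge> 0" and lipex: "\<exists>M. M-lipschitz_on {0..a} f"
    and ae: "AE t in lborel. t \<in> {0<..<a} \<longrightarrow> (\<exists>v. (f has_vector_derivative v) (at t) \<and> norm v = 1)"
    using C unfolding curves_C_def by auto
  obtain M where lip: "M-lipschitz_on {0..a} f" using lipex by blast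
  define D where "D t v \<longleftrightarrow> (f has_vector_derivative v) (at t) \<and> norm v = 1" for t v
  define u where "u t = (if \<exists>v. D t v then SOME v. D t v else 0)" for t
  have uD: "D t (u t)" if "\<exists>v. D t v" for t
    using that someI_ex[OF that] unfolding u_def by simp
  have ub: "norm (u t) \<le> 1" for t
    using uD[of t] by (cases "\<exists>v. D t v") (auto simp: u_def D_def)
  obtain N where N: "{t \<in> space lborel. \<not> (t \<in> {0<..<a} \<longrightarrow> (\<exists>v. D t v))} \<subseteq> N"
      "emeasure lborel N = 0" "N \<in> sets lborel"
    using ae unfolding D_def[symmetric] by (rule AE_E)
  have negN: "negligible N"
    using N(2,3) by (simp add: negligible_iff_null_sets null_sets_completionI null_setsI)
  have goodpt: "\<exists>v. D t v" if "t \<in> {0<..<a}" "t \<notin> N" for t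
    using N(1) that by auto
  show ?thesis
  proof (rule that[OF ub])
    fix t assume t: "t \<in> {0..a}"
    show "(u has_integral (f t - f 0)) {0..t}"
    proof (cases "t = 0")
      case True then show ?thesis using has_integral_refl(2)[of u 0] by simp
    next
      case False
      then have t0: "0 < t" using t by auto
      show ?thesis
      proof (rule ftc_lipschitz[OF t0 _ negN])
        show "M-lipschitz_on {0..t} f" using lip by (rule lipschitz_on_subset) (use t in auto)
        fix x assume x: "x \<in> {0<..<t} - N"
        then have "\<exists>v. D x v" using t by (intro goodpt) auto
        then show "(f has_vector_derivative u x) (at x)" using uD D_def by blast
      next
        fix x show "norm (u x) \<le> 1" by (rule ub)
      qed
    qed
  next
    have "{t \<in> {0..a}. norm (u t) \<noteq> 1} \<subseteq> N \<union> {0, a}"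
    proof
      fix t assume "t \<in> {t \<in> {0..a}. norm (u t) \<noteq> 1}"
      then have "t \<in> {0..a}" "norm (u t) \<noteq> 1" by auto
      moreover have "t \<in> {0<..<a} \<Longrightarrow> t \<notin> N \<Longrightarrow> norm (u t) = 1"
        using uD goodpt D_def by blast
      ultimately show "t \<in> N \<union> {0, a}" by force
    qed
    then show "negligible {t \<in> {0..a}. norm (u t) \<noteq> 1}"
      using negN negligible_subset by (metis negligible_Un_eq negligible_insert negligible_empty)
  qed
qed

lemma approx_curve:
  fixes f :: "real \<Rightarrow> 'a::euclidean_space"
  assumes dim: "DIM('a) \<ge> 2" and C: "(a, f) \<in> curves_C" and \<delta>: "\<delta> > 0"
  obtains \<psi> where "(a, \<psi>) \<in> curves_C" "in_H2 (a, \<psi>)" "\<And>s. s \<in> {0..a} \<Longrightarrow> norm (\<psi> s - f s) \<le> \<delta>"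
proof -
  have a: "a \<ge> 0" using C unfolding curves_C_def by auto
  obtain u where ub: "\<And>t. norm (u t) \<le> 1" and uint: "\<And>t. t \<in> {0..a} \<Longrightarrow> (u has_integral (f t - f 0)) {0..t}"
    and uneg: "negligible {t \<in> {0..a}. norm (u t) \<noteq> 1}"
    using curve_rep[OF C] by blast
  have ui: "u integrable_on {0..a}" using uint[of a] a by auto
  have \<delta>2: "\<delta>/2 > 0" using \<delta> by simp
  obtain w w' where wd: "\<And>t. (w has_vector_derivative w' t) (at t)" and w'c: "continuous_on UNIV w'"
    and nz: "\<And>t. w t \<noteq> 0" and ni: "(\<lambda>t. norm (u t - w t)) integrable_on {0..a}"
    and nI: "integral {0..a} (\<lambda>t. norm (u t - w t)) < \<delta>/2"
    using smooth_unit_approx[OF dim a ui ub \<delta>2] by blast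
  define v where "v = (\<lambda>t. inverse (norm (w t)) *\<^sub>R w t)"
  define \<psi> where "\<psi> = (\<lambda>s. f 0 + integral {0..s} v)"
  have C\<psi>: "(a, \<psi>) \<in> curves_C" and H\<psi>: "in_H2 (a, \<psi>)"
    using construct_curve[OF a wd w'c nz, of "f 0"] unfolding \<psi>_def v_def by auto
  have wc: "continuous_on UNIV w"
    using wd by (meson continuous_at_imp_continuous_on has_vector_derivative_continuous)
  have vc: "continuous_on UNIV v" unfolding v_def
    by (intro continuous_intros wc) (auto simp: nz)
  have uabs: "u absolutely_integrable_on {0..a}"
    by (rule absolutely_integrable_integrable_bound[where g="\<lambda>_. 1"]) (use ub ui in auto)
  have nui: "(\<lambda>t. norm (u t)) integrable_on {0..a}"
    using uabs by (simp add: absolutely_integrable_on_def)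
  define g where "g = (\<lambda>t. 2 * norm (u t - w t) + (1 - norm (u t)))"
  have gi: "g integrable_on {0..a}" unfolding g_def
    using ni nui by (intro integrable_add integrable_diff integrable_cmul integrable_on_const) auto
  have g0: "g t \<ge> 0" for t unfolding g_def using ub[of t] by simp
  have pt: "norm (v t - u t) \<le> g t" for t
  proof -
    have "v t - w t = (inverse (norm (w t)) - 1) *\<^sub>R w t" unfolding v_def by (simp add: algebra_simps)
    then have "norm (v t - w t) = \<bar>1 - norm (w t)\<bar>" using nz[of t]
      by (simp add: field_simps abs_minus_commute)
    also have "\<dots> \<le> (1 - norm (u t)) + norm (u t - w t)"
      using ub[of t] norm_triangle_ineq3[of "u t" "w t"] by linarith
    finally have "norm (v t - w t) \<le> (1 - norm (u t)) + norm (u t - w t)" .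
    moreover have "norm (v t - u t) \<le> norm (v t - w t) + norm (w t - u t)"
      by (rule norm_diff_triangle_le) auto
    ultimately show ?thesis unfolding g_def by (simp add: norm_minus_commute)
  qed
  have Ig: "integral {0..a} g < \<delta>"
  proof -
    have I2: "integral {0..a} (\<lambda>t. 2 * norm (u t - w t)) = 2 * integral {0..a} (\<lambda>t. norm (u t - w t))"
      by (rule integral_mult[OF ni, symmetric])
    have i2: "(\<lambda>t. 2 * norm (u t - w t)) integrable_on {0..a}" using ni by (rule integrable_on_mult_right)
    have i3: "(\<lambda>t. 1 - norm (u t)) integrable_on {0..a}" using nui by (intro integrable_diff integrable_on_const) auto
    have "integral {0..a} g = 2 * integral {0..a} (\<lambda>t. norm (u t - w t)) + integral {0..a} (\<lambda>t. 1 - norm (u t))"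
      unfolding g_def integral_add[OF i2 i3] I2 ..
    also have "integral {0..a} (\<lambda>t. 1 - norm (u t)) = integral {0..a} (\<lambda>t. 0::real)"
      by (rule integral_spike[OF uneg]) auto
    finally show ?thesis using nI by simp
  qed
  show ?thesis
  proof (rule that[OF C\<psi> H\<psi>])
    fix s assume s: "s \<in> {0..a}"
    have vi: "v integrable_on {0..s}" using vc continuous_on_subset integrable_continuous_interval by blast
    have uis: "(u has_integral (f s - f 0)) {0..s}" using uint[OF s] .
    have "\<psi> s - f s = integral {0..s} (\<lambda>t. v t - u t)"
      unfolding \<psi>_def using integral_diff[OF vi has_integral_integrable[OF uis]] integral_unique[OF uis]
      by (simp add: algebra_simps)
    then have "norm (\<psi> s - f s) \<le> integral {0..s} g"
      using integrable_diff[OF vi has_integral_integrable[OF uis]] integrable_on_subinterval[OF gi, of 0 s] s pt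
      by (auto intro!: integral_norm_bound_integral)
    also have "\<dots> \<le> integral {0..a} g"
      using integrable_on_subinterval[OF gi, of 0 s] gi s g0 by (intro integral_subset_le) auto
    finally show "norm (\<psi> s - f s) \<le> \<delta>" using Ig by simp
  qed
qed

lemma mono_enn2ereal: "mono enn2ereal"
  by (rule monoI) (simp add: less_eq_ennreal.rep_eq)

lemma liminf_enn2ereal: "liminf (\<lambda>n. enn2ereal (f n)) = enn2ereal (liminf f)"
  by (rule Liminf_compose_continuous_mono[OF continuous_on_enn2ereal mono_enn2ereal]) simp

lemma limsup_enn2ereal: "limsup (\<lambda>n. enn2ereal (f n)) = enn2ereal (limsup f)"
  by (rule Limsup_compose_continuous_mono[OF continuous_on_enn2ereal mono_enn2ereal]) simp

lemma ennreal_liminf_add: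
  fixes f g :: "nat \<Rightarrow> ennreal"
  shows "liminf f + liminf g \<le> liminf (\<lambda>n. f n + g n)"
proof -
  have "enn2ereal (liminf f + liminf g) = liminf (\<lambda>n. enn2ereal (f n)) + liminf (\<lambda>n. enn2ereal (g n))"
    by (simp add: liminf_enn2ereal plus_ennreal.rep_eq)
  also have "\<dots> \<le> liminf (\<lambda>n. enn2ereal (f n) + enn2ereal (g n))"
    by (rule Liminf_add_le) auto
  also have "\<dots> = enn2ereal (liminf (\<lambda>n. f n + g n))"
    by (simp add: liminf_enn2ereal[symmetric] plus_ennreal.rep_eq)
  finally show ?thesis by (simp add: less_eq_ennreal.rep_eq)
qed

lemma ennreal_limsup_add:
  fixes f g :: "nat \<Rightarrow> ennreal"
  shows "limsup (\<lambda>n. f n + g n) \<le> limsup f + limsup g"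
proof -
  have "enn2ereal (limsup (\<lambda>n. f n + g n)) = limsup (\<lambda>n. enn2ereal (f n) + enn2ereal (g n))"
    by (simp add: limsup_enn2ereal[symmetric] plus_ennreal.rep_eq)
  also have "\<dots> \<le> limsup (\<lambda>n. enn2ereal (f n)) + limsup (\<lambda>n. enn2ereal (g n))"
    by (rule ereal_limsup_add_mono)
  also have "\<dots> = enn2ereal (limsup f + limsup g)"
    by (simp add: limsup_enn2ereal plus_ennreal.rep_eq)
  finally show ?thesis by (simp add: less_eq_ennreal.rep_eq)
qed

lemma C_props:
  assumes "(a, f) \<in> curves_C"
  shows "a \<ge> 0" "continuous_on {0..a} f" "\<exists>B. \<forall>s\<in>{0..a}. norm (f s) \<le> B"
proof -
  show a: "a \<ge> 0" using assms unfolding curves_C_def by auto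
  obtain M where "M-lipschitz_on {0..a} f" using assms unfolding curves_C_def by auto
  then show c: "continuous_on {0..a} f" by (rule lipschitz_on_continuous_on)
  have "compact (f ` {0..a})" using c by (rule compact_continuous_image[OF _ compact_Icc])
  then have "bounded (f ` {0..a})" by (rule compact_imp_bounded)
  then show "\<exists>B. \<forall>s\<in>{0..a}. norm (f s) \<le> B" by (auto simp: bounded_iff)
qed

lemma hd_infdist:
  assumes A: "A \<noteq> {}" and B: "B \<noteq> {}"
    and AB: "\<forall>y\<in>A. \<exists>z\<in>B. dist y z \<le> d" and BA: "\<forall>z\<in>B. \<exists>y\<in>A. dist y z \<le> d"
  shows "\<bar>infdist x A - infdist x B\<bar> \<le> d"
proof -
  have 1: "infdist x A - d \<le> infdist x B"
  proof -
    have "infdist x A - d \<le> dist x z" if z: "z \<in> B" for z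
    proof -
      obtain y where y: "y \<in> A" "dist y z \<le> d" using BA z by blast
      have "infdist x A \<le> dist x y" using y(1) by (rule infdist_le)
      also have "\<dots> \<le> dist x z + dist z y" by (rule dist_triangle)
      finally show ?thesis using y(2) by (simp add: dist_commute)
    qed
    then show ?thesis unfolding infdist_notempty[OF B] by (intro cINF_greatest B) auto
  qed
  have 2: "infdist x B - d \<le> infdist x A"
  proof -
    have "infdist x B - d \<le> dist x y" if y: "y \<in> A" for y
    proof -
      obtain z where z: "z \<in> B" "dist y z \<le> d" using AB y by blast
      have "infdist x B \<le> dist x z" using z(1) by (rule infdist_le)
      also have "\<dots> \<le> dist x y + dist y z" by (rule dist_triangle)
      finally show ?thesis using z(2) by simp
    qed
    then show ?thesis unfolding infdist_notempty[OF A] by (intro cINF_greatest A) auto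
  qed
  from 1 2 show ?thesis by linarith
qed

lemma Sup_elem_le:
  fixes g :: "real \<Rightarrow> real"
  assumes "\<And>t. t \<in> {0..1} \<Longrightarrow> g t \<le> K" "t \<in> {0..1}"
  shows "g t \<le> Sup (g ` {0..1})"
  by (rule cSup_upper) (use assms in \<open>auto intro!: bdd_aboveI2[where M=K]\<close>)

lemma curve_dist_props:
  fixes f1 f2 :: "real \<Rightarrow> 'a::euclidean_space"
  assumes C1: "(a1, f1) \<in> curves_C" and C2: "(a2, f2) \<in> curves_C"
  shows "\<bar>infdist x (curve_image (a1, f1)) - infdist x (curve_image (a2, f2))\<bar> \<le> curve_dist (a1, f1) (a2, f2)"
    "\<bar>a1 - a2\<bar> \<le> curve_dist (a1, f1) (a2, f2)"
proof -
  have a1: "a1 \<ge> 0" and a2: "a2 \<ge> 0" using C_props C1 C2 by blast+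
  obtain B1 where B1: "\<And>s. s \<in> {0..a1} \<Longrightarrow> norm (f1 s) \<le> B1" using C_props(3)[OF C1] by blast
  obtain B2 where B2: "\<And>s. s \<in> {0..a2} \<Longrightarrow> norm (f2 s) \<le> B2" using C_props(3)[OF C2] by blast
  define g1 where "g1 = (\<lambda>t. norm (f1 (t * a1) - f2 (t * a2)))"
  define g2 where "g2 = (\<lambda>t. norm (f1 (a1 - t * a1) - f2 (t * a2)))"
  define S1 where "S1 = Sup (g1 ` {0..1})"
  define S2 where "S2 = Sup (g2 ` {0..1})"
  have mem: "t * a \<in> {0..a}" "a - t * a \<in> {0..a}" if "t \<in> {0..1}" "a \<ge> 0" for t a :: real
    using that by (auto simp: mult_left_le_one_le mult_nonneg_nonneg)
  have gb1: "g1 t \<le> B1 + B2" if "t \<in> {0..1}" for t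
    unfolding g1_def using B1[OF mem(1)[OF that a1]] B2[OF mem(1)[OF that a2]]
    by (smt (verit) norm_triangle_ineq4)
  have gb2: "g2 t \<le> B1 + B2" if "t \<in> {0..1}" for t
    unfolding g2_def using B1[OF mem(2)[OF that a1]] B2[OF mem(1)[OF that a2]]
    by (smt (verit) norm_triangle_ineq4)
  have le1: "g1 t \<le> S1" if "t \<in> {0..1}" for t unfolding S1_def by (rule Sup_elem_le[OF gb1 that])
  have le2: "g2 t \<le> S2" if "t \<in> {0..1}" for t unfolding S2_def by (rule Sup_elem_le[OF gb2 that])
  have S1nn: "S1 \<ge> 0" using le1[of 0] unfolding g1_def by (smt (verit) atLeastAtMost_iff norm_ge_zero)
  have S2nn: "S2 \<ge> 0" using le2[of 0] unfolding g2_def by (smt (verit) atLeastAtMost_iff norm_ge_zero)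
  have cd: "curve_dist (a1, f1) (a2, f2) = min S1 S2 + \<bar>a1 - a2\<bar>"
    unfolding curve_dist_def S1_def S2_def g1_def g2_def by simp
  show "\<bar>a1 - a2\<bar> \<le> curve_dist (a1, f1) (a2, f2)" unfolding cd using S1nn S2nn by simp
  define par where "par = (\<lambda>s a::real. if a = 0 then 0 else s / a)"
  have par: "par s a \<in> {0..1}" "par s a * a = s" if "s \<in> {0..a}" for s a
    using that unfolding par_def by (auto simp: field_simps)
  define rpar where "rpar = (\<lambda>s a::real. if a = 0 then 0 else (a - s) / a)"
  have rpar: "rpar s a \<in> {0..1}" "a - rpar s a * a = s" if "s \<in> {0..a}" for s a
    using that unfolding rpar_def by (auto simp: field_simps)
  have I1ne: "curve_image (a1, f1) \<noteq> {}" "curve_image (a2, f2) \<noteq> {}"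
    unfolding curve_image_def using a1 a2 by auto
  have H1: "\<bar>infdist x (curve_image (a1, f1)) - infdist x (curve_image (a2, f2))\<bar> \<le> S1"
  proof (rule hd_infdist[OF I1ne])
    show "\<forall>y\<in>curve_image (a1, f1). \<exists>z\<in>curve_image (a2, f2). dist y z \<le> S1"
    proof
      fix y assume "y \<in> curve_image (a1, f1)"
      then obtain s where s: "s \<in> {0..a1}" "y = f1 s" unfolding curve_image_def by auto
      let ?t = "par s a1"
      have "f2 (?t * a2) \<in> curve_image (a2, f2)" unfolding curve_image_def using mem(1)[OF par(1)[OF s(1)] a2] by auto
      moreover have "dist y (f2 (?t * a2)) \<le> S1"
        using le1[OF par(1)[OF s(1)]] par(2)[OF s(1)] s(2) unfolding g1_def by (simp add: dist_norm)
      ultimately show "\<exists>z\<in>curve_image (a2, f2). dist y z \<le> S1" by blast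
    qed
    show "\<forall>z\<in>curve_image (a2, f2). \<exists>y\<in>curve_image (a1, f1). dist y z \<le> S1"
    proof
      fix z assume "z \<in> curve_image (a2, f2)"
      then obtain s where s: "s \<in> {0..a2}" "z = f2 s" unfolding curve_image_def by auto
      let ?t = "par s a2"
      have "f1 (?t * a1) \<in> curve_image (a1, f1)" unfolding curve_image_def using mem(1)[OF par(1)[OF s(1)] a1] by auto
      moreover have "dist (f1 (?t * a1)) z \<le> S1"
        using le1[OF par(1)[OF s(1)]] par(2)[OF s(1)] s(2) unfolding g1_def by (simp add: dist_norm)
      ultimately show "\<exists>y\<in>curve_image (a1, f1). dist y z \<le> S1" by blast
    qed
  qed
  have H2: "\<bar>infdist x (curve_image (a1, f1)) - infdist x (curve_image (a2, f2))\<bar> \<le> S2"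
  proof (rule hd_infdist[OF I1ne])
    show "\<forall>y\<in>curve_image (a1, f1). \<exists>z\<in>curve_image (a2, f2). dist y z \<le> S2"
    proof
      fix y assume "y \<in> curve_image (a1, f1)"
      then obtain s where s: "s \<in> {0..a1}" "y = f1 s" unfolding curve_image_def by auto
      let ?t = "rpar s a1"
      have "f2 (?t * a2) \<in> curve_image (a2, f2)" unfolding curve_image_def using mem(1)[OF rpar(1)[OF s(1)] a2] by auto
      moreover have "dist y (f2 (?t * a2)) \<le> S2"
        using le2[OF rpar(1)[OF s(1)]] rpar(2)[OF s(1)] s(2) unfolding g2_def by (simp add: dist_norm)
      ultimately show "\<exists>z\<in>curve_image (a2, f2). dist y z \<le> S2" by blast
    qed
    show "\<forall>z\<in>curve_image (a2, f2). \<exists>y\<in>curve_image (a1, f1). dist y z \<le> S2"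
    proof
      fix z assume "z \<in> curve_image (a2, f2)"
      then obtain s where s: "s \<in> {0..a2}" "z = f2 s" unfolding curve_image_def by auto
      let ?t = "par s a2"
      have "f1 (a1 - ?t * a1) \<in> curve_image (a1, f1)" unfolding curve_image_def using mem(2)[OF par(1)[OF s(1)] a1] by auto
      moreover have "dist (f1 (a1 - ?t * a1)) z \<le> S2"
        using le2[OF par(1)[OF s(1)]] par(2)[OF s(1)] s(2) unfolding g2_def by (simp add: dist_norm)
      ultimately show "\<exists>y\<in>curve_image (a1, f1). dist y z \<le> S2" by blast
    qed
  qed
  show "\<bar>infdist x (curve_image (a1, f1)) - infdist x (curve_image (a2, f2))\<bar> \<le> curve_dist (a1, f1) (a2, f2)"
    unfolding cd using H1 H2 by (smt (verit) min_def)
qed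

lemma curve_dist_same_len:
  fixes g f :: "real \<Rightarrow> 'a::real_normed_vector"
  assumes "\<And>s. s \<in> {0..a} \<Longrightarrow> norm (g s - f s) \<le> \<delta>" "a \<ge> 0"
  shows "curve_dist (a, g) (a, f) \<le> \<delta>"
proof -
  have "Sup ((\<lambda>t. norm (g (t * a) - f (t * a))) ` {0..1}) \<le> \<delta>"
  proof (rule cSup_least)
    show "(\<lambda>t. norm (g (t * a) - f (t * a))) ` {0..1} \<noteq> {}" by auto
    fix y assume "y \<in> (\<lambda>t. norm (g (t * a) - f (t * a))) ` {0..1}"
    then obtain t where t: "t \<in> {0..1}" "y = norm (g (t * a) - f (t * a))" by auto
    have "t * a \<in> {0..a}" using t(1) assms(2) by (auto simp: mult_left_le_one_le)
    then show "y \<le> \<delta>" using assms(1) t(2) by simp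
  qed
  then show ?thesis unfolding curve_dist_def by (simp add: min_le_iff_disj)
qed

lemma diagonal_choice:
  fixes \<epsilon> E :: "nat \<Rightarrow> real"
  assumes eps: "\<epsilon> \<longlonglongrightarrow> 0"
  obtains \<kappa> :: "nat \<Rightarrow> nat" where "filterlim \<kappa> at_top sequentially" "(\<lambda>n. \<epsilon> n * E (\<kappa> n)) \<longlonglongrightarrow> 0"
proof -
  have "\<exists>N. \<forall>n\<ge>N. \<bar>\<epsilon> n * E j\<bar> < 1 / (real j + 1)" for j
  proof -
    have pos: "1 / ((real j + 1) * (\<bar>E j\<bar> + 1)) > 0" by simp
    obtain N where N: "\<forall>n\<ge>N. norm (\<epsilon> n - 0) < 1 / ((real j + 1) * (\<bar>E j\<bar> + 1))"
      using LIMSEQ_D[OF eps pos] by blast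
    have "\<bar>\<epsilon> n * E j\<bar> < 1 / (real j + 1)" if "n \<ge> N" for n
    proof -
      have e: "\<bar>\<epsilon> n\<bar> < 1 / ((real j + 1) * (\<bar>E j\<bar> + 1))" using N that by simp
      have "\<bar>\<epsilon> n * E j\<bar> = \<bar>\<epsilon> n\<bar> * \<bar>E j\<bar>" by (simp add: abs_mult)
      also have "\<dots> \<le> \<bar>\<epsilon> n\<bar> * (\<bar>E j\<bar> + 1)" by (simp add: mult_left_mono)
      also have "\<dots> < 1 / ((real j + 1) * (\<bar>E j\<bar> + 1)) * (\<bar>E j\<bar> + 1)"
        using e by (intro mult_strict_right_mono) auto
      also have "\<dots> = 1 / (real j + 1)"
      proof -
        have B: "\<bar>E j\<bar> + 1 \<noteq> 0" by simp
        have "1 / ((real j + 1) * (\<bar>E j\<bar> + 1)) * (\<bar>E j\<bar> + 1) = (\<bar>E j\<bar> + 1) / ((real j + 1) * (\<bar>E j\<bar> + 1))"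
          by simp
        also have "\<dots> = 1 / (real j + 1)" using B by (rule nonzero_divide_mult_cancel_right)
        finally show ?thesis .
      qed
      finally show ?thesis .
    qed
    then show ?thesis by blast
  qed
  then obtain N where N: "\<And>j n. n \<ge> N j \<Longrightarrow> \<bar>\<epsilon> n * E j\<bar> < 1 / (real j + 1)" by metis
  define \<kappa> where "\<kappa> n = (if {j. j \<le> n \<and> N j \<le> n} = {} then 0 else Max {j. j \<le> n \<and> N j \<le> n})" for n
  have fin: "finite {j. j \<le> n \<and> N j \<le> n}" for n by simp
  have k1: "N (\<kappa> n) \<le> n" if "n \<ge> N 0" for n
  proof -
    have ne: "{j. j \<le> n \<and> N j \<le> n} \<noteq> {}" using that by auto
    then have "\<kappa> n \<in> {j. j \<le> n \<and> N j \<le> n}" unfolding \<kappa>_def using Max_in[OF fin ne] by simp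
    then show ?thesis by simp
  qed
  have k2: "\<kappa> n \<ge> j" if "n \<ge> j" "n \<ge> N j" for n j
  proof -
    have "j \<in> {j. j \<le> n \<and> N j \<le> n}" using that by simp
    then show ?thesis unfolding \<kappa>_def using Max_ge[OF fin] by auto
  qed
  have lim: "filterlim \<kappa> at_top sequentially"
    unfolding filterlim_at_top eventually_sequentially
  proof (intro allI)
    fix Z show "\<exists>M. \<forall>n\<ge>M. Z \<le> \<kappa> n"
      by (rule exI[of _ "max Z (N Z)"]) (use k2 in simp)
  qed
  have "(\<lambda>n. \<epsilon> n * E (\<kappa> n)) \<longlonglongrightarrow> 0"
  proof (rule LIMSEQ_I)
    fix r :: real assume r: "r > 0"
    obtain m :: nat where m: "m > 0" "inverse (real m) < r" using ex_inverse_of_nat_less[OF r] by blast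
    define j where "j = m - 1"
    have "real j + 1 = real m" unfolding j_def using m(1) by simp
    then have j: "1 / (real j + 1) < r" using m(2) by (simp add: inverse_eq_divide)
    show "\<exists>no. \<forall>n\<ge>no. norm (\<epsilon> n * E (\<kappa> n) - 0) < r"
    proof (intro exI allI impI)
      fix n assume n: "n \<ge> max (N 0) (max j (N j))"
      have "\<bar>\<epsilon> n * E (\<kappa> n)\<bar> < 1 / (real (\<kappa> n) + 1)" using N k1 n by simp
      also have "\<dots> \<le> 1 / (real j + 1)" using k2[of j n] n by (simp add: frac_le)
      finally show "norm (\<epsilon> n * E (\<kappa> n) - 0) < r" using j by simp
    qed
  qed
  with lim that show ?thesis by blast
qed

lemma infdist_powr_meas:
  fixes \<mu> :: "'a::euclidean_space measure"
  assumes "sets \<mu> = sets borel" "p > 0"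
  shows "(\<lambda>x. ennreal (infdist x S powr p)) \<in> borel_measurable \<mu>"
proof -
  have "continuous_on UNIV (\<lambda>x. infdist x S powr p)"
    by (rule continuous_on_powr') (use assms(2) in \<open>auto intro: continuous_intros simp: infdist_nonneg\<close>)
  then have "(\<lambda>x. ennreal (infdist x S powr p)) \<in> borel_measurable borel"
    by (intro borel_measurable_continuous_onI continuous_on_ennreal)
  then show ?thesis using measurable_cong_sets[OF assms(1) refl] by blast
qed

lemma conv_props:
  fixes \<phi>s :: "nat \<Rightarrow> 'a::euclidean_space curve"
  assumes Cs: "\<And>n. \<phi>s n \<in> curves_C" and C: "\<phi> \<in> curves_C"
    and d: "(\<lambda>n. curve_dist (\<phi>s n) \<phi>) \<longlonglongrightarrow> 0" and p: "p > 0"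
  shows "(\<lambda>n. ennreal (infdist x (curve_image (\<phi>s n)) powr p)) \<longlonglongrightarrow> ennreal (infdist x (curve_image \<phi>) powr p)"
    "(\<lambda>n. curve_len (\<phi>s n)) \<longlonglongrightarrow> curve_len \<phi>"
proof -
  have cs: "\<phi>s n = (fst (\<phi>s n), snd (\<phi>s n))" for n by simp
  have c: "\<phi> = (fst \<phi>, snd \<phi>)" by simp
  have b1: "\<bar>infdist x (curve_image (\<phi>s n)) - infdist x (curve_image \<phi>)\<bar> \<le> curve_dist (\<phi>s n) \<phi>" for n
    using curve_dist_props(1)[of "fst (\<phi>s n)" "snd (\<phi>s n)" "fst \<phi>" "snd \<phi>" x] Cs[of n] C by simp
  have b2: "\<bar>fst (\<phi>s n) - fst \<phi>\<bar> \<le> curve_dist (\<phi>s n) \<phi>" for n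
    using curve_dist_props(2)[of "fst (\<phi>s n)" "snd (\<phi>s n)" "fst \<phi>" "snd \<phi>"] Cs[of n] C by simp
  have "(\<lambda>n. infdist x (curve_image (\<phi>s n)) - infdist x (curve_image \<phi>)) \<longlonglongrightarrow> 0"
    by (rule Lim_null_comparison[OF _ d]) (use b1 in auto)
  then have i: "(\<lambda>n. infdist x (curve_image (\<phi>s n))) \<longlonglongrightarrow> infdist x (curve_image \<phi>)"
    by (simp add: LIM_zero_iff)
  show "(\<lambda>n. ennreal (infdist x (curve_image (\<phi>s n)) powr p)) \<longlonglongrightarrow> ennreal (infdist x (curve_image \<phi>) powr p)"
    by (intro tendsto_ennrealI tendsto_powr2[OF i tendsto_const] p) (auto simp: infdist_nonneg)
  have "(\<lambda>n. fst (\<phi>s n) - fst \<phi>) \<longlonglongrightarrow> 0"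
    by (rule Lim_null_comparison[OF _ d]) (use b2 in auto)
  then show "(\<lambda>n. curve_len (\<phi>s n)) \<longlonglongrightarrow> curve_len \<phi>"
    unfolding curve_len_def by (simp add: LIM_zero_iff)
qed

theorem lemma2p6:
  fixes \<mu> :: "'a::euclidean_space measure" and lam p :: real and \<epsilon> :: "nat \<Rightarrow> real"
  assumes "DIM('a) \<ge> 2"
    and "sets \<mu> = sets borel" and "finite_measure \<mu>"
    and "\<exists>K. compact K \<and> emeasure \<mu> (space \<mu> - K) = 0"
    and "lam > 0" and "p \<ge> 1"
    and "\<forall>n. \<epsilon> n > 0" and "\<epsilon> \<longlonglongrightarrow> 0"
  shows "(\<forall>\<phi>s \<phi>. (\<forall>n. \<phi>s n \<in> curves_C) \<longrightarrow> \<phi> \<in> curves_C \<longrightarrow>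
            (\<lambda>n. curve_dist (\<phi>s n) \<phi>) \<longlonglongrightarrow> 0 \<longrightarrow>
            liminf (\<lambda>n. Eps_fun \<mu> lam (\<epsilon> n) p (\<phi>s n)) \<ge> E_fun \<mu> lam p \<phi>)
       \<and> (\<forall>\<phi>\<in>curves_C. \<exists>\<phi>s. (\<forall>n. \<phi>s n \<in> curves_C) \<and>
            (\<lambda>n. curve_dist (\<phi>s n) \<phi>) \<longlonglongrightarrow> 0 \<and>
            limsup (\<lambda>n. Eps_fun \<mu> lam (\<epsilon> n) p (\<phi>s n)) \<le> E_fun \<mu> lam p \<phi>)"
proof -
  obtain K where K: "compact K" "emeasure \<mu> (space \<mu> - K) = 0" using assms(4) by blast
  have p0: "p > 0" using assms(6) by simp
  define I where "I c = (\<integral>\<^sup>+ x. ennreal (infdist x (curve_image c) powr p) \<partial>\<mu>)" for c :: "'a curve"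
  define L where "L c = ennreal (lam * curve_len c)" for c :: "'a curve"
  have Eps_ge: "I c + L c \<le> Eps_fun \<mu> lam e p c" for e c
    unfolding Eps_fun_def I_def L_def by auto
  have Eps_eq: "Eps_fun \<mu> lam e p c = I c + L c + ennreal (e * curvature_energy c)"
    if "c \<in> curves_C" "in_H2 c" for e c
    unfolding Eps_fun_def I_def L_def using that by auto
  have E_eq: "E_fun \<mu> lam p c = I c + L c" for c unfolding E_fun_def I_def L_def ..
  have meas: "\<And>S. (\<lambda>x. ennreal (infdist x S powr p)) \<in> borel_measurable \<mu>"
    using infdist_powr_meas[OF assms(2) p0] .
  have Lconv: "(\<lambda>n. L (\<phi>s n)) \<longlonglongrightarrow> L \<phi>"
    if "(\<lambda>n. curve_len (\<phi>s n)) \<longlonglongrightarrow> curve_len \<phi>" for \<phi>s :: "nat \<Rightarrow> 'a curve" and \<phi>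
    unfolding L_def by (intro tendsto_ennrealI tendsto_mult_left that)
  show ?thesis
  proof (intro conjI allI impI ballI)
    fix \<phi>s :: "nat \<Rightarrow> 'a curve" and \<phi> :: "'a curve"
    assume Cs: "\<forall>n. \<phi>s n \<in> curves_C" and C: "\<phi> \<in> curves_C"
      and d: "(\<lambda>n. curve_dist (\<phi>s n) \<phi>) \<longlonglongrightarrow> 0"
    have conv: "(\<lambda>n. ennreal (infdist x (curve_image (\<phi>s n)) powr p)) \<longlonglongrightarrow> ennreal (infdist x (curve_image \<phi>) powr p)" for x
      using conv_props(1)[OF _ C d p0] Cs by blast
    have lconv: "(\<lambda>n. L (\<phi>s n)) \<longlonglongrightarrow> L \<phi>"
      using conv_props(2)[OF _ C d p0] Cs Lconv by blast
    have "E_fun \<mu> lam p \<phi> = (\<integral>\<^sup>+ x. liminf (\<lambda>n. ennreal (infdist x (curve_image (\<phi>s n)) powr p)) \<partial>\<mu>) + liminf (\<lambda>n. L (\<phi>s n))"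
      unfolding E_eq I_def using lim_imp_Liminf[OF trivial_limit_sequentially conv] lim_imp_Liminf[OF trivial_limit_sequentially lconv]
      by simp
    also have "\<dots> \<le> liminf (\<lambda>n. I (\<phi>s n)) + liminf (\<lambda>n. L (\<phi>s n))"
      unfolding I_def by (intro add_mono nn_integral_liminf order_refl meas)
    also have "\<dots> \<le> liminf (\<lambda>n. I (\<phi>s n) + L (\<phi>s n))"
      by (rule ennreal_liminf_add)
    also have "\<dots> \<le> liminf (\<lambda>n. Eps_fun \<mu> lam (\<epsilon> n) p (\<phi>s n))"
      by (intro Liminf_mono always_eventually allI Eps_ge)
    finally show "E_fun \<mu> lam p \<phi> \<le> liminf (\<lambda>n. Eps_fun \<mu> lam (\<epsilon> n) p (\<phi>s n))" .
  next
    fix \<phi> :: "'a curve" assume C: "\<phi> \<in> curves_C"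
    obtain a f where \<phi>: "\<phi> = (a, f)" by fastforce
    have Caf: "(a, f) \<in> curves_C" using C \<phi> by simp
    have a0: "a \<ge> 0" using C_props(1)[OF Caf] .
    have "\<exists>\<psi>. (a, \<psi>) \<in> curves_C \<and> in_H2 (a, \<psi>) \<and> (\<forall>s\<in>{0..a}. norm (\<psi> s - f s) \<le> 1 / (real k + 1))" for k
    proof -
      have "1 / (real k + 1) > 0" by simp
      show ?thesis
        apply (rule approx_curve[OF assms(1) Caf \<open>1 / (real k + 1) > 0\<close>])
        subgoal for \<psi> by (rule exI[of _ \<psi>]) auto
        done
    qed
    then have "\<forall>k. \<exists>\<psi>. (a, \<psi>) \<in> curves_C \<and> in_H2 (a, \<psi>) \<and> (\<forall>s\<in>{0..a}. norm (\<psi> s - f s) \<le> 1 / (real k + 1))"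
      by blast
    from choice[OF this] obtain \<Psi> where \<Psi>: "\<forall>k. (a, \<Psi> k) \<in> curves_C \<and> in_H2 (a, \<Psi> k) \<and> (\<forall>s\<in>{0..a}. norm (\<Psi> k s - f s) \<le> 1 / (real k + 1))"
      by blast
    have \<Psi>C: "\<And>k. (a, \<Psi> k) \<in> curves_C" and \<Psi>H: "\<And>k. in_H2 (a, \<Psi> k)"
      and \<Psi>d: "\<And>k s. s \<in> {0..a} \<Longrightarrow> norm (\<Psi> k s - f s) \<le> 1 / (real k + 1)"
      using \<Psi> by blast+
    obtain \<kappa> where \<kappa>: "filterlim \<kappa> at_top sequentially"
      and \<kappa>e: "(\<lambda>n. \<epsilon> n * curvature_energy (a, \<Psi> (\<kappa> n))) \<longlonglongrightarrow> 0"
      using diagonal_choice[OF assms(8), of "\<lambda>k. curvature_energy (a, \<Psi> k)"] by blast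
    define \<phi>s where "\<phi>s n = (a, \<Psi> (\<kappa> n))" for n
    have Cs: "\<forall>n. \<phi>s n \<in> curves_C" unfolding \<phi>s_def using \<Psi>C by simp
    have dle: "curve_dist (\<phi>s n) \<phi> \<le> 1 / (real (\<kappa> n) + 1)" for n
      unfolding \<phi>s_def \<phi> by (rule curve_dist_same_len[OF \<Psi>d a0])
    have dge: "curve_dist (\<phi>s n) \<phi> \<ge> 0" for n
      using curve_dist_props(2)[of a "\<Psi> (\<kappa> n)" a f] \<Psi>C Caf unfolding \<phi>s_def \<phi> by simp
    have b0: "(\<lambda>n. 1 / (real (\<kappa> n) + 1)) \<longlonglongrightarrow> 0"
    proof -
      have "(\<lambda>k. inverse (real (Suc k))) \<longlonglongrightarrow> 0" by (rule LIMSEQ_inverse_real_of_nat)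
      from filterlim_compose[OF this \<kappa>] show ?thesis by (simp add: inverse_eq_divide add.commute)
    qed
    have d: "(\<lambda>n. curve_dist (\<phi>s n) \<phi>) \<longlonglongrightarrow> 0"
      by (rule tendsto_sandwich[OF _ _ tendsto_const b0]) (use dle dge in auto)
    have dle1: "curve_dist (\<phi>s n) \<phi> \<le> 1" for n
    proof -
      have "1 / (real (\<kappa> n) + 1) \<le> 1" by simp
      then show ?thesis using dle[of n] by linarith
    qed
    have conv: "(\<lambda>n. ennreal (infdist x (curve_image (\<phi>s n)) powr p)) \<longlonglongrightarrow> ennreal (infdist x (curve_image \<phi>) powr p)" for x
      using conv_props(1)[OF _ C d p0] Cs by blast
    have Lc: "L (\<phi>s n) = L \<phi>" for n unfolding L_def \<phi>s_def \<phi> curve_len_def by simp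
    have Ceq: "Eps_fun \<mu> lam (\<epsilon> n) p (\<phi>s n) = I (\<phi>s n) + L \<phi> + ennreal (\<epsilon> n * curvature_energy (a, \<Psi> (\<kappa> n)))" for n
      using Eps_eq[of "\<phi>s n" "\<epsilon> n"] Cs \<Psi>H Lc unfolding \<phi>s_def by simp
    obtain RK where RK: "\<And>x. x \<in> K \<Longrightarrow> norm x \<le> RK"
      using compact_imp_bounded[OF K(1)] by (auto simp: bounded_iff)
    define R where "R = RK + norm (f 0) + 1"
    have f0: "f 0 \<in> curve_image \<phi>" unfolding \<phi> curve_image_def using a0 by auto
    have dom: "ennreal (infdist x (curve_image (\<phi>s n)) powr p) \<le> ennreal (R powr p)" if x: "x \<in> K" for x n
    proof -
      have "\<bar>infdist x (curve_image (\<phi>s n)) - infdist x (curve_image \<phi>)\<bar> \<le> curve_dist (\<phi>s n) \<phi>"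
        using curve_dist_props(1)[of a "\<Psi> (\<kappa> n)" a f x] \<Psi>C Caf unfolding \<phi>s_def \<phi> by simp
      then have "infdist x (curve_image (\<phi>s n)) \<le> infdist x (curve_image \<phi>) + 1" using dle1[of n] by linarith
      also have "infdist x (curve_image \<phi>) \<le> dist x (f 0)" using f0 by (rule infdist_le)
      also have "dist x (f 0) \<le> norm x + norm (f 0)" by (simp add: dist_norm norm_triangle_ineq4)
      finally have "infdist x (curve_image (\<phi>s n)) \<le> R" unfolding R_def using RK[OF x] by linarith
      then have "infdist x (curve_image (\<phi>s n)) powr p \<le> R powr p"
        using p0 by (intro powr_mono2) (auto simp: infdist_nonneg)
      then show ?thesis by (rule ennreal_leI)
    qed
    have spK: "space \<mu> = UNIV" using sets_eq_imp_space_eq[OF assms(2)] by simp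
    have Kmeas: "space \<mu> - K \<in> sets \<mu>"
    proof -
      have "K \<in> sets borel" using K(1) by (simp add: borel_compact)
      then have "space borel - K \<in> sets borel" by (rule sets.compl_sets)
      then show ?thesis using assms(2) spK by simp
    qed
    have aeK: "AE x in \<mu>. x \<in> K"
      by (rule AE_I'[of "space \<mu> - K"]) (use K(2) Kmeas in auto)
    have Ilim: "limsup (\<lambda>n. I (\<phi>s n)) \<le> I \<phi>"
    proof -
      have "limsup (\<lambda>n. I (\<phi>s n)) \<le> (\<integral>\<^sup>+ x. limsup (\<lambda>n. ennreal (infdist x (curve_image (\<phi>s n)) powr p)) \<partial>\<mu>)"
        unfolding I_def
      proof (rule nn_integral_limsup[where w="\<lambda>_. ennreal (R powr p)"])
        show "\<And>i. AE x in \<mu>. ennreal (infdist x (curve_image (\<phi>s i)) powr p) \<le> ennreal (R powr p)"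
          using aeK by (rule eventually_mono) (rule dom)
        have "(\<integral>\<^sup>+x. ennreal (R powr p) \<partial>\<mu>) = ennreal (R powr p) * emeasure \<mu> (space \<mu>)" by simp
        also have "\<dots> < \<infinity>" using finite_measure.emeasure_finite[OF assms(3)]
          by (simp add: ennreal_mult_less_top top.not_eq_extremum)
        finally show "(\<integral>\<^sup>+x. ennreal (R powr p) \<partial>\<mu>) < \<infinity>" .
      qed (use meas in auto)
      also have "\<dots> = I \<phi>"
        unfolding I_def using lim_imp_Limsup[OF trivial_limit_sequentially conv] by simp
      finally show ?thesis .
    qed
    have climsup: "limsup (\<lambda>n. ennreal (\<epsilon> n * curvature_energy (a, \<Psi> (\<kappa> n)))) = 0"
    proof -
      have "(\<lambda>n. ennreal (\<epsilon> n * curvature_energy (a, \<Psi> (\<kappa> n)))) \<longlonglongrightarrow> ennreal 0"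
        by (rule tendsto_ennrealI[OF \<kappa>e])
      from lim_imp_Limsup[OF trivial_limit_sequentially this] show ?thesis by simp
    qed
    have "limsup (\<lambda>n. Eps_fun \<mu> lam (\<epsilon> n) p (\<phi>s n))
        = limsup (\<lambda>n. (I (\<phi>s n) + L \<phi>) + ennreal (\<epsilon> n * curvature_energy (a, \<Psi> (\<kappa> n))))"
      using Ceq by simp
    also have "\<dots> \<le> limsup (\<lambda>n. I (\<phi>s n) + L \<phi>) + limsup (\<lambda>n. ennreal (\<epsilon> n * curvature_energy (a, \<Psi> (\<kappa> n))))"
      by (rule ennreal_limsup_add)
    also have "\<dots> = limsup (\<lambda>n. I (\<phi>s n) + L \<phi>)" using climsup by simp
    also have "\<dots> \<le> limsup (\<lambda>n. I (\<phi>s n)) + limsup (\<lambda>n. L \<phi>)"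
      by (rule ennreal_limsup_add)
    also have "\<dots> \<le> I \<phi> + L \<phi>" using Ilim by (simp add: add_mono Limsup_const)
    also have "\<dots> = E_fun \<mu> lam p \<phi>" by (simp add: E_eq)
    finally show "\<exists>\<phi>s. (\<forall>n. \<phi>s n \<in> curves_C) \<and> (\<lambda>n. curve_dist (\<phi>s n) \<phi>) \<longlonglongrightarrow> 0 \<and>
            limsup (\<lambda>n. Eps_fun \<mu> lam (\<epsilon> n) p (\<phi>s n)) \<le> E_fun \<mu> lam p \<phi>"
      using Cs d by blast
  qed
qed

end
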